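(* Let $A\in\mathbb{R}^{M\times N}$ with $M\ge N$, let $\tau\ge 0$, and let $B=\begin{bmatrix}-\tau I_M & A\\ A^T & -\tau I_N\end{bmatrix}$. Let $\widetilde U\in\mathbb{R}^{M\times k}$, $\widetilde V\in\mathbb{R}^{N\times k}$ have orthonormal columns, let $(\theta_1,c_1,d_1)$ be a singular triplet of $H=\widetilde U^TA\widetilde V$ with $\theta_1$ closest to $\tau$ among the singular values of $H$, set $\tilde u_1=\widetilde Uc_1$, $\tilde v_1=\widetilde Vd_1$, and $r=\begin{bmatrix}A\tilde v_1-\theta_1\tilde u_1\\ A^T\tilde u_1-\theta_1\tilde v_1\end{bmatrix}$. Let $\widetilde P_1\in\mathbb{R}^{M\times(M-1)}$ and $\widetilde Q_1\in\mathbb{R}^{N\times(N-1)}$ be such that $[\tilde u_1,\widetilde P_1]$ and $[\tilde v_1,\widetilde Q_1]$ are orthogonal, and set $\widetilde W_1=\begin{bmatrix}\widetilde P_1&0\\0&\widetilde Q_1\end{bmatrix}$, $$\widetilde B_1'=\widetilde W_1^TB\widetilde W_1=\begin{bmatrix}-\tau I_{M-1}&\widetilde P_1^TA\widetilde Q_1\\ \widetilde Q_1^TA^T\widetilde P_1&-\tau I_{N-1}\end{bmatrix},\qquad \widetilde B_1=\widetilde W_1\widetilde B_1'\widetilde W_1^T .$$ Consider the correction equation $$\begin{bmatrix}I-\tilde u_1\tilde u_1^T&0\\0&I-\tilde v_1\tilde v_1^T\end{bmatrix}B\begin{bmatrix}I-\tilde u_1\tilde u_1^T&0\\0&I-\tilde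 v_1\tilde v_1^T\end{bmatrix}w=-r,\qquad\text{i.e. } \widetilde B_1w=-r,$$ for $w=(s^T,t^T)^T$ with $s\perp\tilde u_1$, $t\perp\tilde v_1$. Then its solution is $w=\widetilde W_1z$, where $z\in\mathbb{R}^{M+N-2}$ solves $\widetilde B_1'z=-r'$ with $r'=\widetilde W_1^Tr$. Moreover, if MINRES is applied to $\widetilde B_1w=-r$ and to $\widetilde B_1'z=-r'$ with initial guesses $\tilde w_0$ and $\tilde z_0$ satisfying $\tilde w_0=\widetilde W_1\tilde z_0$, then the $j$th iterates satisfy $\tilde w_j=\widetilde W_1\tilde z_j$ for $j=1,2,\dots,M+N-2$, and, writing $r_{\mathrm{in},j}=\widetilde B_1\tilde w_j+r$ and $r'_{\mathrm{in},j}=\widetilde B_1'\tilde z_j+r'$, one has $\|r_{\mathrm{in},j}\|=\|r'_{\mathrm{in},j}\|$ for $j=0,1,\dots,M+N-2$.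
   Context: $\|\cdot\|$ is the Euclidean vector norm / spectral matrix norm. MINRES applied to a symmetric system $Cx=-b$ with initial guess $x_0$ produces, at step $j$, the iterate $x_j\in x_0+\mathcal{K}_j(C,Cx_0+b)$ minimizing $\|Cx+b\|$ over that affine space, where $\mathcal{K}_j(C,y)=\mathrm{span}\{y,Cy,\dots,C^{j-1}y\}$. By construction, $r$ satisfies $r_{1:M}\perp\tilde u_1$ and $r_{M+1:M+N}\perp\tilde v_1$. *)

theory Defs
  imports "Jordan_Normal_Form.Matrix"
begin

definition vnorm :: "real vec \<Rightarrow> real" where
  "vnorm v = sqrt (v \<bullet> v)"

definition outer :: "real vec \<Rightarrow> real vec \<Rightarrow> real mat" where
  "outer u v = mat (dim_vec u) (dim_vec v) (\<lambda>(i,j). u $ i * v $ j)"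

definition singular_triplet :: "real mat \<Rightarrow> real \<Rightarrow> real vec \<Rightarrow> real vec \<Rightarrow> bool" where
  "singular_triplet H \<sigma> c d \<longleftrightarrow>
     c \<in> carrier_vec (dim_row H) \<and> d \<in> carrier_vec (dim_col H) \<and>
     vnorm c = 1 \<and> vnorm d = 1 \<and> \<sigma> \<ge> 0 \<and>
     H *\<^sub>v d = \<sigma> \<cdot>\<^sub>v c \<and> transpose_mat H *\<^sub>v c = \<sigma> \<cdot>\<^sub>v d"

definition singular_values :: "real mat \<Rightarrow> real set" where
  "singular_values H = {\<sigma>. \<exists>c d. singular_triplet H \<sigma> c d}"

definition krylov :: "real mat \<Rightarrow> real vec \<Rightarrow> nat \<Rightarrow> real vec set" where
  "krylov C y j = {v. \<exists>a :: nat \<Rightarrow> real.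
      v = vec (dim_vec y) (\<lambda>l. \<Sum>i<j. a i * ((C ^\<^sub>m i) *\<^sub>v y) $ l)}"

definition minres_iterate :: "real mat \<Rightarrow> real vec \<Rightarrow> real vec \<Rightarrow> nat \<Rightarrow> real vec \<Rightarrow> bool" where
  "minres_iterate C b x0 j x \<longleftrightarrow>
     (\<exists>d \<in> krylov C (C *\<^sub>v x0 + b) j. x = x0 + d) \<and>
     (\<forall>d \<in> krylov C (C *\<^sub>v x0 + b) j. vnorm (C *\<^sub>v x + b) \<le> vnorm (C *\<^sub>v (x0 + d) + b))"

end

theory Submission
  imports Defs "Jordan_Normal_Form.Determinant"
begin


lemma mult_mat_vec_uminus'[simp]: "dim_vec v = dim_col (A :: real mat) \<Longrightarrow> A *\<^sub>v (- v) = - (A *\<^sub>v v)"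
  by (intro eq_vecI) (auto simp: scalar_prod_def sum_negf[symmetric])

lemma krylov_carrier: "v \<in> krylov C y j \<Longrightarrow> v \<in> carrier_vec (dim_vec y)"
  unfolding krylov_def by auto

lemma lin_comb_W:
  fixes W :: "real mat"
  assumes W: "W \<in> carrier_mat n m" and v: "\<And>i. v i \<in> carrier_vec m"
  shows "vec n (\<lambda>l. \<Sum>i<j. a i * (W *\<^sub>v v i) $ l) = W *\<^sub>v vec m (\<lambda>l. \<Sum>i<j. a i * v i $ l)"
proof (rule eq_vecI)
  fix l assume l: "l < dim_vec (W *\<^sub>v vec m (\<lambda>l. \<Sum>i<j. a i * v i $ l))"
  hence l': "l < n" using W by auto
  have vd: "dim_vec (v i) = m" for i using v[of i] by auto
  have "(\<Sum>i<j. a i * (W *\<^sub>v v i) $ l) = (\<Sum>i<j. \<Sum>k<m. a i * (W $$ (l,k) * v i $ k))"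
    using W vd l' by (auto simp: scalar_prod_def sum_distrib_left lessThan_atLeast0 intro!: sum.cong)
  also have "\<dots> = (\<Sum>k<m. \<Sum>i<j. W $$ (l,k) * (a i * v i $ k))"
    by (subst sum.swap) (simp add: mult_ac)
  also have "\<dots> = (W *\<^sub>v vec m (\<lambda>l. \<Sum>i<j. a i * v i $ l)) $ l"
    using W l' by (auto simp: scalar_prod_def sum_distrib_left lessThan_atLeast0 intro!: sum.cong)
  finally show "vec n (\<lambda>l. \<Sum>i<j. a i * (W *\<^sub>v v i) $ l) $ l = (W *\<^sub>v vec m (\<lambda>l. \<Sum>i<j. a i * v i $ l)) $ l"
    using l' by simp
qed (use W in auto)

lemma vnorm_W:
  assumes W: "W \<in> carrier_mat n m" and WtW: "transpose_mat W * W = 1\<^sub>m m" and x: "x \<in> carrier_vec m"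
  shows "vnorm (W *\<^sub>v x) = vnorm x"
proof -
  have "(W *\<^sub>v x) \<bullet> (W *\<^sub>v x) = (transpose_mat W *\<^sub>v (W *\<^sub>v x)) \<bullet> x"
    by (rule transpose_vec_mult_scalar[OF W x, symmetric]) (use W x in auto)
  also have "transpose_mat W *\<^sub>v (W *\<^sub>v x) = x"
    using W x WtW by (metis assoc_mult_mat_vec carrier_matI index_transpose_mat(2,3) carrier_matD one_mult_mat_vec)
  finally show ?thesis unfolding vnorm_def by simp
qed

lemma abstract_part:
  fixes W B :: "real mat" and r z0 w0 :: "real vec"
  assumes W: "W \<in> carrier_mat n m" and WtW: "transpose_mat W * W = 1\<^sub>m m"
    and B: "B \<in> carrier_mat n n" and r: "r \<in> carrier_vec n"
    and Pr: "W *\<^sub>v (transpose_mat W *\<^sub>v r) = r"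
    and z0: "z0 \<in> carrier_vec m" and w0: "w0 = W *\<^sub>v z0"
    and B1'_def: "B1' = transpose_mat W * B * W"
    and B1_def: "B1 = W * B1' * transpose_mat W"
    and r'_def: "r' = transpose_mat W *\<^sub>v r"
  shows "(\<forall>x \<in> carrier_vec n. W *\<^sub>v (transpose_mat W *\<^sub>v x) = x \<longrightarrow>
            (B1 *\<^sub>v x = - r \<longleftrightarrow> (\<exists>z \<in> carrier_vec m. x = W *\<^sub>v z \<and> B1' *\<^sub>v z = - r')))"
    and "\<forall>z \<in> carrier_vec m. B1' *\<^sub>v z = - r' \<longrightarrow> B1 *\<^sub>v (W *\<^sub>v z) = - r"
    and "\<forall>j z. minres_iterate B1' r' z0 j z \<longrightarrow> minres_iterate B1 r w0 j (W *\<^sub>v z)"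
    and "\<forall>j w. minres_iterate B1 r w0 j w \<longrightarrow> (\<exists>z. minres_iterate B1' r' z0 j z \<and> w = W *\<^sub>v z)"
    and "\<forall>j w z. minres_iterate B1 r w0 j w \<longrightarrow> minres_iterate B1' r' z0 j z \<longrightarrow>
          vnorm (B1 *\<^sub>v w + r) = vnorm (B1' *\<^sub>v z + r')"
proof -
  define Wt where "Wt = transpose_mat W"
  have Wt: "Wt \<in> carrier_mat m n" using W unfolding Wt_def by auto
  have B1': "B1' \<in> carrier_mat m m" using W B unfolding B1'_def by auto
  have B1: "B1 \<in> carrier_mat n n" using W B1' unfolding B1_def by auto
  have r': "r' \<in> carrier_vec m" using Wt r unfolding r'_def Wt_def by auto
  have rW: "r = W *\<^sub>v r'" using Pr unfolding r'_def by simp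
  have B1W: "B1 * W = W * B1'"
  proof -
    have "B1 * W = W * B1' * (Wt * W)" unfolding B1_def Wt_def[symmetric]
      by (rule assoc_mult_mat[of "W * B1'" n m Wt n W m]) (use W Wt B1' in auto)
    also have "\<dots> = W * B1'" using WtW W B1' unfolding Wt_def by auto
    finally show ?thesis .
  qed
  have B1Wv: "B1 *\<^sub>v (W *\<^sub>v x) = W *\<^sub>v (B1' *\<^sub>v x)" if x: "x \<in> carrier_vec m" for x
    using B1W x W B1 B1' by (metis assoc_mult_mat_vec)
  have WtWv: "Wt *\<^sub>v (W *\<^sub>v x) = x" if x: "x \<in> carrier_vec m" for x
    using WtW x W Wt unfolding Wt_def by (metis assoc_mult_mat_vec one_mult_mat_vec)
  have pow: "(B1 ^\<^sub>m i) * W = W * (B1' ^\<^sub>m i)" for i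
  proof (induct i)
    case 0 then show ?case using W B1 B1' by simp
  next
    case (Suc i)
    have "B1 ^\<^sub>m Suc i * W = B1 ^\<^sub>m i * (B1 * W)" using B1 W
      by (simp, intro assoc_mult_mat[of _ n n _ n _ m]) auto
    also have "\<dots> = (B1 ^\<^sub>m i * W) * B1'" unfolding B1W
      by (rule assoc_mult_mat[symmetric, of _ n n _ m _ m]) (use B1 W B1' in auto)
    also have "\<dots> = W * (B1' ^\<^sub>m i * B1')" unfolding Suc
      by (rule assoc_mult_mat[of _ n m _ m _ m]) (use B1 W B1' in auto)
    finally show ?case by simp
  qed
  have powv: "(B1 ^\<^sub>m i) *\<^sub>v (W *\<^sub>v y) = W *\<^sub>v ((B1' ^\<^sub>m i) *\<^sub>v y)" if y: "y \<in> carrier_vec m" for i y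
  proof -
    have "(B1 ^\<^sub>m i) *\<^sub>v (W *\<^sub>v y) = ((B1 ^\<^sub>m i) * W) *\<^sub>v y"
      by (rule assoc_mult_mat_vec[symmetric, of _ n n _ m]) (use y W B1 in auto)
    also have "\<dots> = W *\<^sub>v ((B1' ^\<^sub>m i) *\<^sub>v y)" unfolding pow
      by (rule assoc_mult_mat_vec[of _ n m _ m]) (use y W B1' in auto)
    finally show ?thesis .
  qed
  have kry: "krylov B1 (W *\<^sub>v y) j = (\<lambda>d. W *\<^sub>v d) ` krylov B1' y j" if y: "y \<in> carrier_vec m" for y j
  proof -
    have eq: "vec (dim_vec (W *\<^sub>v y)) (\<lambda>l. \<Sum>i<j. a i * ((B1 ^\<^sub>m i) *\<^sub>v (W *\<^sub>v y)) $ l)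
       = W *\<^sub>v vec (dim_vec y) (\<lambda>l. \<Sum>i<j. a i * ((B1' ^\<^sub>m i) *\<^sub>v y) $ l)" for a
      using lin_comb_W[OF W, where v="\<lambda>i. (B1' ^\<^sub>m i) *\<^sub>v y" and j=j and a=a, OF mult_mat_vec_carrier[OF pow_carrier_mat[OF B1'] y]] y W B1'
      by (simp add: powv)
    show ?thesis unfolding krylov_def eq by auto
  qed
  have obj: "B1 *\<^sub>v (W *\<^sub>v x) + r = W *\<^sub>v (B1' *\<^sub>v x + r')" if x: "x \<in> carrier_vec m" for x
    using x B1' r' W by (simp add: B1Wv rW mult_add_distrib_mat_vec[of W n m])
  have objn: "vnorm (B1 *\<^sub>v (W *\<^sub>v x) + r) = vnorm (B1' *\<^sub>v x + r')" if x: "x \<in> carrier_vec m" for x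
    unfolding obj[OF x] using vnorm_W[OF W WtW] x B1' r' by simp
  have y0: "B1 *\<^sub>v w0 + r = W *\<^sub>v (B1' *\<^sub>v z0 + r')" unfolding w0 by (rule obj[OF z0])
  have y0c: "B1' *\<^sub>v z0 + r' \<in> carrier_vec m" using B1' z0 r' by auto
  have K: "krylov B1 (B1 *\<^sub>v w0 + r) j = (\<lambda>d. W *\<^sub>v d) ` krylov B1' (B1' *\<^sub>v z0 + r') j" for j
    unfolding y0 by (rule kry[OF y0c])
  have Kc: "d \<in> krylov B1' (B1' *\<^sub>v z0 + r') j \<Longrightarrow> d \<in> carrier_vec m" for d j
    using krylov_carrier[of d B1' "B1' *\<^sub>v z0 + r'" j] r' by auto
  have sumW: "w0 + W *\<^sub>v d = W *\<^sub>v (z0 + d)" if "d \<in> carrier_vec m" for d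
    using that z0 W unfolding w0 by (simp add: mult_add_distrib_mat_vec[of W n m])
  have fwd: "minres_iterate B1 r w0 j (W *\<^sub>v z)" if mz: "minres_iterate B1' r' z0 j z" for j z
  proof -
    from mz obtain d where d: "d \<in> krylov B1' (B1' *\<^sub>v z0 + r') j" and zd: "z = z0 + d"
      unfolding minres_iterate_def by auto
    have dc: "d \<in> carrier_vec m" using Kc[OF d] .
    have zc: "z \<in> carrier_vec m" using zd dc z0 by auto
    show ?thesis unfolding minres_iterate_def K
    proof (intro conjI ballI)
      show "\<exists>e\<in>(\<lambda>d. W *\<^sub>v d) ` krylov B1' (B1' *\<^sub>v z0 + r') j. W *\<^sub>v z = w0 + e"
        using d sumW[OF dc] zd by (metis image_eqI)
      fix e assume "e \<in> (\<lambda>d. W *\<^sub>v d) ` krylov B1' (B1' *\<^sub>v z0 + r') j"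
      then obtain e' where e': "e' \<in> krylov B1' (B1' *\<^sub>v z0 + r') j" and e: "e = W *\<^sub>v e'" by auto
      have e'c: "e' \<in> carrier_vec m" using Kc[OF e'] .
      have "vnorm (B1 *\<^sub>v (W *\<^sub>v z) + r) = vnorm (B1' *\<^sub>v z + r')" using objn[OF zc] .
      also have "\<dots> \<le> vnorm (B1' *\<^sub>v (z0 + e') + r')" using mz e' unfolding minres_iterate_def by auto
      also have "\<dots> = vnorm (B1 *\<^sub>v (w0 + e) + r)" unfolding e sumW[OF e'c]
        using objn e'c z0 by simp
      finally show "vnorm (B1 *\<^sub>v (W *\<^sub>v z) + r) \<le> vnorm (B1 *\<^sub>v (w0 + e) + r)" .
    qed
  qed
  have bwd: "\<exists>z. minres_iterate B1' r' z0 j z \<and> w = W *\<^sub>v z" if mw: "minres_iterate B1 r w0 j w" for j w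
  proof -
    from mw obtain d where d: "d \<in> krylov B1' (B1' *\<^sub>v z0 + r') j" and wd: "w = w0 + W *\<^sub>v d"
      unfolding minres_iterate_def K by auto
    have dc: "d \<in> carrier_vec m" using Kc[OF d] .
    have wz: "w = W *\<^sub>v (z0 + d)" using wd sumW[OF dc] by simp
    have zc: "z0 + d \<in> carrier_vec m" using dc z0 by auto
    have "minres_iterate B1' r' z0 j (z0 + d)" unfolding minres_iterate_def
    proof (intro conjI ballI)
      show "\<exists>e\<in>krylov B1' (B1' *\<^sub>v z0 + r') j. z0 + d = z0 + e" using d by auto
      fix e' assume e': "e' \<in> krylov B1' (B1' *\<^sub>v z0 + r') j"
      have e'c: "e' \<in> carrier_vec m" using Kc[OF e'] .
      have "vnorm (B1' *\<^sub>v (z0 + d) + r') = vnorm (B1 *\<^sub>v w + r)" using objn[OF zc] wz by simp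
      also have "\<dots> \<le> vnorm (B1 *\<^sub>v (w0 + W *\<^sub>v e') + r)" using mw e' unfolding minres_iterate_def K by auto
      also have "\<dots> = vnorm (B1' *\<^sub>v (z0 + e') + r')" unfolding sumW[OF e'c]
        using objn e'c z0 by simp
      finally show "vnorm (B1' *\<^sub>v (z0 + d) + r') \<le> vnorm (B1' *\<^sub>v (z0 + e') + r')" .
    qed
    then show ?thesis using wz by blast
  qed
  show "\<forall>j z. minres_iterate B1' r' z0 j z \<longrightarrow> minres_iterate B1 r w0 j (W *\<^sub>v z)" using fwd by blast
  show "\<forall>j w. minres_iterate B1 r w0 j w \<longrightarrow> (\<exists>z. minres_iterate B1' r' z0 j z \<and> w = W *\<^sub>v z)" using bwd by blast
  show "\<forall>j w z. minres_iterate B1 r w0 j w \<longrightarrow> minres_iterate B1' r' z0 j z \<longrightarrow>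
          vnorm (B1 *\<^sub>v w + r) = vnorm (B1' *\<^sub>v z + r')"
  proof (intro allI impI)
    fix j w z assume mw: "minres_iterate B1 r w0 j w" and mz: "minres_iterate B1' r' z0 j z"
    obtain z1 where mz1: "minres_iterate B1' r' z0 j z1" and wz: "w = W *\<^sub>v z1" using bwd[OF mw] by blast
    from mz1 obtain d1 where d1: "d1 \<in> krylov B1' (B1' *\<^sub>v z0 + r') j" and z1d: "z1 = z0 + d1"
      unfolding minres_iterate_def by auto
    from mz obtain d where d: "d \<in> krylov B1' (B1' *\<^sub>v z0 + r') j" and zd: "z = z0 + d"
      unfolding minres_iterate_def by auto
    have z1c: "z1 \<in> carrier_vec m" using Kc[OF d1] z1d z0 by auto
    have "vnorm (B1' *\<^sub>v z + r') \<le> vnorm (B1' *\<^sub>v z1 + r')" using mz d1 z1d unfolding minres_iterate_def by auto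
    moreover have "vnorm (B1' *\<^sub>v z1 + r') \<le> vnorm (B1' *\<^sub>v z + r')" using mz1 d zd unfolding minres_iterate_def by auto
    ultimately show "vnorm (B1 *\<^sub>v w + r) = vnorm (B1' *\<^sub>v z + r')" using objn[OF z1c] wz by simp
  qed
  show "\<forall>z \<in> carrier_vec m. B1' *\<^sub>v z = - r' \<longrightarrow> B1 *\<^sub>v (W *\<^sub>v z) = - r"
  proof (intro ballI impI)
    fix z assume z: "z \<in> carrier_vec m" and e: "B1' *\<^sub>v z = - r'"
    have "B1 *\<^sub>v (W *\<^sub>v z) = W *\<^sub>v (- r')" using B1Wv[OF z] e by simp
    also have "\<dots> = - r" using rW W r' by simp
    finally show "B1 *\<^sub>v (W *\<^sub>v z) = - r" .
  qed
  then have backw: "\<forall>z \<in> carrier_vec m. B1' *\<^sub>v z = - r' \<longrightarrow> B1 *\<^sub>v (W *\<^sub>v z) = - r" .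
  show "\<forall>x \<in> carrier_vec n. W *\<^sub>v (transpose_mat W *\<^sub>v x) = x \<longrightarrow>
            (B1 *\<^sub>v x = - r \<longleftrightarrow> (\<exists>z \<in> carrier_vec m. x = W *\<^sub>v z \<and> B1' *\<^sub>v z = - r'))"
  proof (intro ballI impI iffI)
    fix x assume x: "x \<in> carrier_vec n" and px: "W *\<^sub>v (transpose_mat W *\<^sub>v x) = x" and e: "B1 *\<^sub>v x = - r"
    define z where "z = Wt *\<^sub>v x"
    have zc: "z \<in> carrier_vec m" using Wt x unfolding z_def by auto
    have xz: "x = W *\<^sub>v z" using px unfolding z_def Wt_def by simp
    have "B1' *\<^sub>v z = Wt *\<^sub>v (W *\<^sub>v (B1' *\<^sub>v z))" using WtWv B1' zc by simp
    also have "\<dots> = Wt *\<^sub>v (B1 *\<^sub>v x)" using B1Wv[OF zc] xz by simp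
    also have "\<dots> = - r'" using e Wt r unfolding r'_def Wt_def by simp
    finally show "\<exists>z \<in> carrier_vec m. x = W *\<^sub>v z \<and> B1' *\<^sub>v z = - r'" using zc xz by blast
  next
    fix x assume "\<exists>z \<in> carrier_vec m. x = W *\<^sub>v z \<and> B1' *\<^sub>v z = - r'"
    then show "B1 *\<^sub>v x = - r" using backw by blast
  qed
qed



lemma orth_facts:
  fixes u :: "real vec" and P :: "real mat"
  assumes u: "u \<in> carrier_vec M" and P: "P \<in> carrier_mat M (M - 1)"
    and X: "transpose_mat (mat_of_cols M (u # cols P)) * mat_of_cols M (u # cols P) = 1\<^sub>m M"
  shows "M \<ge> 1" "transpose_mat P * P = 1\<^sub>m (M - 1)" "transpose_mat P *\<^sub>v u = 0\<^sub>v (M - 1)"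
    "P * transpose_mat P = 1\<^sub>m M - outer u u" "u \<bullet> u = 1"
proof -
  define X where "X = mat_of_cols M (u # cols P)"
  have "dim_row (transpose_mat X * X) = dim_row (1\<^sub>m M :: real mat)" using X unfolding X_def by simp
  hence len: "Suc (M - 1) = M" unfolding X_def using P by simp
  then show M1: "M \<ge> 1" by simp
  have Xc: "X \<in> carrier_mat M M" unfolding X_def using P len by (metis carrier_matD(2) cols_length length_Cons mat_of_cols_carrier(1))
  have c0: "col X 0 = u" unfolding X_def using u by (subst col_mat_of_cols) auto
  have cS: "col X (Suc l) = col P l" if "l < M - 1" for l
    unfolding X_def using that P by (subst col_mat_of_cols) auto
  have XX: "(transpose_mat X * X) $$ (a, b) = col X a \<bullet> col X b" if "a < M" "b < M" for a b
    using that Xc by simp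
  have one: "col X a \<bullet> col X b = (if a = b then 1 else 0)" if "a < M" "b < M" for a b
    using XX[OF that] X that unfolding X_def[symmetric] by simp
  show "u \<bullet> u = 1" using one[of 0 0] M1 c0 by simp
  show "transpose_mat P * P = 1\<^sub>m (M - 1)"
  proof (rule eq_matI)
    fix a b assume "a < dim_row (1\<^sub>m (M - 1) :: real mat)" "b < dim_col (1\<^sub>m (M - 1) :: real mat)"
    hence ab: "a < M - 1" "b < M - 1" by auto
    have "(transpose_mat P * P) $$ (a, b) = col P a \<bullet> col P b" using ab P by simp
    also have "\<dots> = (if a = b then 1 else 0)" using one[of "Suc a" "Suc b"] ab cS by simp
    finally show "(transpose_mat P * P) $$ (a, b) = 1\<^sub>m (M - 1) $$ (a, b)" using ab by simp
  qed (use P in auto)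
  show "transpose_mat P *\<^sub>v u = 0\<^sub>v (M - 1)"
  proof (rule eq_vecI)
    fix l assume "l < dim_vec (0\<^sub>v (M - 1) :: real vec)"
    hence l: "l < M - 1" by simp
    have "(transpose_mat P *\<^sub>v u) $ l = col P l \<bullet> u" using l P by simp
    also have "\<dots> = 0" using one[of "Suc l" 0] l cS c0 by simp
    finally show "(transpose_mat P *\<^sub>v u) $ l = 0\<^sub>v (M - 1) $ l" using l by simp
  qed (use P in auto)
  have XXt: "X * transpose_mat X = 1\<^sub>m M"
    by (rule mat_mult_left_right_inverse[of "transpose_mat X" M X]) (use Xc X in \<open>auto simp: X_def\<close>)
  have Xe0: "X $$ (i, 0) = u $ i" if "i < M" for i
    using that P len unfolding X_def mat_of_cols_def by auto
  have Xe: "X $$ (i, Suc l) = P $$ (i, l)" if "i < M" "l < M - 1" for i l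
    using that P len unfolding X_def mat_of_cols_def by auto
  show "P * transpose_mat P = 1\<^sub>m M - outer u u"
  proof (rule eq_matI)
    fix i j assume "i < dim_row (1\<^sub>m M - outer u u)" "j < dim_col (1\<^sub>m M - outer u u)"
    hence ij: "i < M" "j < M" using u by (auto simp: outer_def)
    have "(if i = j then 1 else 0) = (X * transpose_mat X) $$ (i, j)" using XXt ij by simp
    also have "\<dots> = (\<Sum>l<M. X $$ (i, l) * X $$ (j, l))"
      using Xc ij by (simp add: scalar_prod_def lessThan_atLeast0)
    also have "\<dots> = (\<Sum>l<Suc (M - 1). X $$ (i, l) * X $$ (j, l))" using len by simp
    also have "\<dots> = u $ i * u $ j + (\<Sum>l<M - 1. P $$ (i, l) * P $$ (j, l))"
      unfolding sum.lessThan_Suc_shift using Xe Xe0 ij by simp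
    finally have e: "(\<Sum>l<M - 1. P $$ (i, l) * P $$ (j, l)) = (if i = j then 1 else 0) - u $ i * u $ j" by simp
    have "(P * transpose_mat P) $$ (i, j) = (\<Sum>l<M - 1. P $$ (i, l) * P $$ (j, l))"
      using P ij by (simp add: scalar_prod_def lessThan_atLeast0)
    then show "(P * transpose_mat P) $$ (i, j) = (1\<^sub>m M - outer u u) $$ (i, j)"
      using e ij u by (simp add: outer_def)
  qed (use P u in \<open>auto simp: outer_def\<close>)
qed

lemma outer_mult: assumes u: "u \<in> carrier_vec n" and x: "x \<in> carrier_vec n"
  shows "outer u u *\<^sub>v x = (u \<bullet> x) \<cdot>\<^sub>v u"
  by (rule eq_vecI) (use u x in \<open>auto simp: outer_def scalar_prod_def sum_distrib_left mult_ac\<close>)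

lemma proj_fix: assumes u: "u \<in> carrier_vec n" and x: "x \<in> carrier_vec n" and ux: "u \<bullet> x = 0"
  shows "(1\<^sub>m n - outer u u) *\<^sub>v x = x"
proof -
  have O: "outer u u \<in> carrier_mat n n" using u by (auto simp: outer_def)
  have "(1\<^sub>m n - outer u u) *\<^sub>v x = x - outer u u *\<^sub>v x"
    using minus_mult_distrib_mat_vec[OF one_carrier_mat O x] x by simp
  also have "\<dots> = x" using outer_mult[OF u x] ux x u by (intro eq_vecI) auto
  finally show ?thesis .
qed



lemma outer_carrier: "u \<in> carrier_vec n \<Longrightarrow> outer u u \<in> carrier_mat n n"
  by (auto simp: outer_def)

lemma proj_carrier: "u \<in> carrier_vec n \<Longrightarrow> 1\<^sub>m n - outer u u \<in> carrier_mat n n"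
  by (auto simp: outer_def)

lemma assoc3v:
  fixes A :: "real mat"
  assumes "A \<in> carrier_mat a b" "B \<in> carrier_mat b c" "C \<in> carrier_mat c d" "x \<in> carrier_vec d"
  shows "(A * B * C) *\<^sub>v x = A *\<^sub>v (B *\<^sub>v (C *\<^sub>v x))"
proof -
  have "(A * B * C) *\<^sub>v x = (A * B) *\<^sub>v (C *\<^sub>v x)"
    by (rule assoc_mult_mat_vec[of _ a c]) (use assms in auto)
  also have "\<dots> = A *\<^sub>v (B *\<^sub>v (C *\<^sub>v x))"
    by (rule assoc_mult_mat_vec[of _ a b]) (use assms in auto)
  finally show ?thesis .
qed

lemma main_lemma:
  fixes M N k :: nat and \<tau> \<theta>1 :: real
    and A U V P1 Q1 :: "real mat" and c1 d1 w0 z0 :: "real vec"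
  assumes A: "A \<in> carrier_mat M N"
    and U: "U \<in> carrier_mat M k" "transpose_mat U * U = 1\<^sub>m k"
    and V: "V \<in> carrier_mat N k" "transpose_mat V * V = 1\<^sub>m k"
    and trip: "singular_triplet (transpose_mat U * A * V) \<theta>1 c1 d1"
    and P1: "P1 \<in> carrier_mat M (M - 1)"
    and Q1: "Q1 \<in> carrier_mat N (N - 1)"
    and orthP: "transpose_mat (mat_of_cols M (U *\<^sub>v c1 # cols P1)) * mat_of_cols M (U *\<^sub>v c1 # cols P1) = 1\<^sub>m M"
    and orthQ: "transpose_mat (mat_of_cols N (V *\<^sub>v d1 # cols Q1)) * mat_of_cols N (V *\<^sub>v d1 # cols Q1) = 1\<^sub>m N"
    and z0: "z0 \<in> carrier_vec (M + N - 2)"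
    and w0z0: "w0 = four_block_mat P1 (0\<^sub>m M (N - 1)) (0\<^sub>m N (M - 1)) Q1 *\<^sub>v z0"
    and B_def: "B = four_block_mat ((-\<tau>) \<cdot>\<^sub>m 1\<^sub>m M) A (transpose_mat A) ((-\<tau>) \<cdot>\<^sub>m 1\<^sub>m N)"
    and u1_def: "u1 = U *\<^sub>v c1" and v1_def: "v1 = V *\<^sub>v d1"
    and r_def: "r = (A *\<^sub>v v1 - \<theta>1 \<cdot>\<^sub>v u1) @\<^sub>v (transpose_mat A *\<^sub>v u1 - \<theta>1 \<cdot>\<^sub>v v1)"
    and W1_def: "W1 = four_block_mat P1 (0\<^sub>m M (N - 1)) (0\<^sub>m N (M - 1)) Q1"
    and B1'_def: "B1' = transpose_mat W1 * B * W1"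
    and B1_def: "B1 = W1 * B1' * transpose_mat W1"
    and r'_def: "r' = transpose_mat W1 *\<^sub>v r"
    and PP_def: "PP = four_block_mat (1\<^sub>m M - outer u1 u1) (0\<^sub>m M N) (0\<^sub>m N M) (1\<^sub>m N - outer v1 v1)"
  shows "B1' = four_block_mat ((-\<tau>) \<cdot>\<^sub>m 1\<^sub>m (M - 1)) (transpose_mat P1 * A * Q1)
                            (transpose_mat Q1 * transpose_mat A * P1) ((-\<tau>) \<cdot>\<^sub>m 1\<^sub>m (N - 1))
     \<and> (\<forall>s t. s \<in> carrier_vec M \<longrightarrow> t \<in> carrier_vec N \<longrightarrow> s \<bullet> u1 = 0 \<longrightarrow> t \<bullet> v1 = 0 \<longrightarrow>
          (PP * B * PP *\<^sub>v (s @\<^sub>v t) = - r \<longleftrightarrow> B1 *\<^sub>v (s @\<^sub>v t) = - r) \<and>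
          (B1 *\<^sub>v (s @\<^sub>v t) = - r \<longleftrightarrow>
             (\<exists>z \<in> carrier_vec (M + N - 2). s @\<^sub>v t = W1 *\<^sub>v z \<and> B1' *\<^sub>v z = - r')))
     \<and> (\<forall>z \<in> carrier_vec (M + N - 2). B1' *\<^sub>v z = - r' \<longrightarrow>
          (\<exists>s t. s \<in> carrier_vec M \<and> t \<in> carrier_vec N \<and> s \<bullet> u1 = 0 \<and> t \<bullet> v1 = 0 \<and>
                 W1 *\<^sub>v z = s @\<^sub>v t \<and> B1 *\<^sub>v (s @\<^sub>v t) = - r))
     \<and> (\<forall>j \<in> {1..M + N - 2}.
          (\<forall>z. minres_iterate B1' r' z0 j z \<longrightarrow> minres_iterate B1 r w0 j (W1 *\<^sub>v z)) \<and>
          (\<forall>w. minres_iterate B1 r w0 j w \<longrightarrow> (\<exists>z. minres_iterate B1' r' z0 j z \<and> w = W1 *\<^sub>v z)))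
     \<and> (\<forall>j \<in> {0..M + N - 2}. \<forall>w z. minres_iterate B1 r w0 j w \<longrightarrow> minres_iterate B1' r' z0 j z \<longrightarrow>
          vnorm (B1 *\<^sub>v w + r) = vnorm (B1' *\<^sub>v z + r'))"
proof -
  let ?H = "transpose_mat U * A * V"
  have Hc: "?H \<in> carrier_mat k k" using U V A by auto
  have c1: "c1 \<in> carrier_vec k" and d1: "d1 \<in> carrier_vec k" using trip Hc unfolding singular_triplet_def by auto
  have Hd: "?H *\<^sub>v d1 = \<theta>1 \<cdot>\<^sub>v c1" and Hc1: "transpose_mat ?H *\<^sub>v c1 = \<theta>1 \<cdot>\<^sub>v d1"
    using trip unfolding singular_triplet_def by auto
  have cc: "c1 \<bullet> c1 = 1" using trip unfolding singular_triplet_def vnorm_def by auto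
  have dd: "d1 \<bullet> d1 = 1" using trip unfolding singular_triplet_def vnorm_def by auto
  have u1: "u1 \<in> carrier_vec M" using U c1 unfolding u1_def by auto
  have v1: "v1 \<in> carrier_vec N" using V d1 unfolding v1_def by auto
  note oP = orth_facts[OF u1 P1 orthP[folded u1_def]]
  note oQ = orth_facts[OF v1 Q1 orthQ[folded v1_def]]
  define m where "m = M + N - 2"
  have mm: "M - 1 + (N - 1) = m" using oP(1) oQ(1) unfolding m_def by simp
  define Wt where "Wt = transpose_mat W1"
  have W1: "W1 \<in> carrier_mat (M + N) m" unfolding W1_def mm[symmetric] using P1 Q1 by auto
  have Wt_eq: "Wt = four_block_mat (transpose_mat P1) (0\<^sub>m (M - 1) N) (0\<^sub>m (N - 1) M) (transpose_mat Q1)"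
    unfolding Wt_def W1_def by (subst transpose_four_block_mat[OF P1 _ _ Q1]) auto
  have WtW: "transpose_mat W1 * W1 = 1\<^sub>m m"
    unfolding Wt_def[symmetric] unfolding Wt_eq W1_def mm[symmetric]
    by (subst mult_four_block_mat[of _ "M - 1" M _ N _ "N - 1" _ _ "M - 1" _ "N - 1"]) (use P1 Q1 oP oQ in auto)
  have WWt: "W1 * transpose_mat W1 = PP"
    unfolding Wt_def[symmetric] unfolding Wt_eq W1_def PP_def
    by (subst mult_four_block_mat[of _ M "M - 1" _ "N - 1" _ N _ _ M _ N]) (use P1 Q1 oP oQ u1 v1 in \<open>auto simp: outer_def\<close>)
  have Bc: "B \<in> carrier_mat (M + N) (M + N)" unfolding B_def using A by auto
  \<comment> \<open>orthogonality of the residual\<close>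
  have uAv: "u1 \<bullet> (A *\<^sub>v v1) = \<theta>1"
  proof -
    have "u1 \<bullet> (A *\<^sub>v v1) = (transpose_mat U *\<^sub>v (A *\<^sub>v v1)) \<bullet> c1"
      unfolding u1_def using transpose_vec_mult_scalar[OF U(1) c1, of "A *\<^sub>v v1"] comm_scalar_prod[of "U *\<^sub>v c1" M "A *\<^sub>v v1"] U A v1 c1 by auto
    also have "transpose_mat U *\<^sub>v (A *\<^sub>v v1) = ?H *\<^sub>v d1"
      unfolding v1_def using assoc3v[of "transpose_mat U" k M A N V k d1] U A V d1 by simp
    finally show ?thesis using Hd cc c1 by simp
  qed
  have vAu: "v1 \<bullet> (transpose_mat A *\<^sub>v u1) = \<theta>1"
  proof -
    have "v1 \<bullet> (transpose_mat A *\<^sub>v u1) = (transpose_mat V *\<^sub>v (transpose_mat A *\<^sub>v u1)) \<bullet> d1"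
      unfolding v1_def using transpose_vec_mult_scalar[OF V(1) d1, of "transpose_mat A *\<^sub>v u1"] comm_scalar_prod[of "V *\<^sub>v d1" N "transpose_mat A *\<^sub>v u1"] V A u1 d1 by auto
    also have "transpose_mat V *\<^sub>v (transpose_mat A *\<^sub>v u1) = transpose_mat ?H *\<^sub>v c1"
    proof -
      have "transpose_mat ?H = transpose_mat V * transpose_mat (transpose_mat U * A)"
        by (rule transpose_mult[of _ k N]) (use U A V in auto)
      also have "transpose_mat (transpose_mat U * A) = transpose_mat A * U"
        using transpose_mult[of "transpose_mat U" k M A N] U A by simp
      finally have tH: "transpose_mat ?H = transpose_mat V * (transpose_mat A * U)" .
      have "transpose_mat ?H *\<^sub>v c1 = transpose_mat V *\<^sub>v ((transpose_mat A * U) *\<^sub>v c1)"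
        unfolding tH by (rule assoc_mult_mat_vec[of _ k N _ k]) (use U A V c1 in auto)
      also have "(transpose_mat A * U) *\<^sub>v c1 = transpose_mat A *\<^sub>v (U *\<^sub>v c1)"
        by (rule assoc_mult_mat_vec[of _ N M _ k]) (use U A c1 in auto)
      finally show ?thesis unfolding u1_def ..
    qed
    finally show ?thesis using Hc1 dd d1 by simp
  qed
  define r1 where "r1 = A *\<^sub>v v1 - \<theta>1 \<cdot>\<^sub>v u1"
  define r2 where "r2 = transpose_mat A *\<^sub>v u1 - \<theta>1 \<cdot>\<^sub>v v1"
  have r1: "r1 \<in> carrier_vec M" and r2: "r2 \<in> carrier_vec N" unfolding r1_def r2_def using A u1 v1 by auto
  have ur1: "u1 \<bullet> r1 = 0" unfolding r1_def using uAv oP(5) u1 A v1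
    by (subst scalar_prod_minus_distrib[of _ M]) auto
  have vr2: "v1 \<bullet> r2 = 0" unfolding r2_def using vAu oQ(5) v1 A u1
    by (subst scalar_prod_minus_distrib[of _ N]) auto
  have r: "r = r1 @\<^sub>v r2" unfolding r_def r1_def r2_def ..
  have rc: "r \<in> carrier_vec (M + N)" using r r1 r2 by auto
  have PP_split: "PP *\<^sub>v (s @\<^sub>v t) = s @\<^sub>v t" if s: "s \<in> carrier_vec M" and t: "t \<in> carrier_vec N"
    and su: "u1 \<bullet> s = 0" and tv: "v1 \<bullet> t = 0" for s t
    unfolding PP_def using s t u1 v1
    by (subst mult_mat_vec_split[of _ M _ N]) (auto simp: outer_carrier proj_carrier proj_fix[OF u1 s su] proj_fix[OF v1 t tv])
  have Pic: "PP \<in> carrier_mat (M + N) (M + N)" unfolding WWt[symmetric] using W1 by auto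
  have WWtv: "W1 *\<^sub>v (transpose_mat W1 *\<^sub>v x) = PP *\<^sub>v x" if "x \<in> carrier_vec (M + N)" for x
    unfolding WWt[symmetric] using W1 that by (simp add: assoc_mult_mat_vec[of _ "M + N" m _ "M + N"])
  have Pr: "W1 *\<^sub>v (transpose_mat W1 *\<^sub>v r) = r" using WWtv[OF rc] PP_split[OF r1 r2 ur1 vr2] r by simp
  have z0m: "z0 \<in> carrier_vec m" using z0 unfolding m_def .
  note AP = abstract_part[OF W1 WtW Bc rc Pr z0m w0z0[folded W1_def] B1'_def B1_def r'_def]
  have claim1: "B1' = four_block_mat ((-\<tau>) \<cdot>\<^sub>m 1\<^sub>m (M - 1)) (transpose_mat P1 * A * Q1)
                            (transpose_mat Q1 * transpose_mat A * P1) ((-\<tau>) \<cdot>\<^sub>m 1\<^sub>m (N - 1))"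
  proof -
    have PtI: "transpose_mat P1 * ((-\<tau>) \<cdot>\<^sub>m 1\<^sub>m M) = (-\<tau>) \<cdot>\<^sub>m transpose_mat P1"
      using mult_smult_distrib[of "transpose_mat P1" "M - 1" M "1\<^sub>m M" M "-\<tau>"] P1 by simp
    have QtI: "transpose_mat Q1 * ((-\<tau>) \<cdot>\<^sub>m 1\<^sub>m N) = (-\<tau>) \<cdot>\<^sub>m transpose_mat Q1"
      using mult_smult_distrib[of "transpose_mat Q1" "N - 1" N "1\<^sub>m N" N "-\<tau>"] Q1 by simp
    have step1: "Wt * B = four_block_mat ((-\<tau>) \<cdot>\<^sub>m transpose_mat P1) (transpose_mat P1 * A)
       (transpose_mat Q1 * transpose_mat A) ((-\<tau>) \<cdot>\<^sub>m transpose_mat Q1)"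
      unfolding Wt_eq B_def
      by (subst mult_four_block_mat[of _ "M - 1" M _ N _ "N - 1" _ _ M _ N]) (use P1 Q1 A PtI QtI in auto)
    have PP1: "((-\<tau>) \<cdot>\<^sub>m transpose_mat P1) * P1 = (-\<tau>) \<cdot>\<^sub>m 1\<^sub>m (M - 1)"
      using mult_smult_assoc_mat[of "transpose_mat P1" "M - 1" M P1 "M - 1" "-\<tau>"] P1 oP(2) by simp
    have QQ1: "((-\<tau>) \<cdot>\<^sub>m transpose_mat Q1) * Q1 = (-\<tau>) \<cdot>\<^sub>m 1\<^sub>m (N - 1)"
      using mult_smult_assoc_mat[of "transpose_mat Q1" "N - 1" N Q1 "N - 1" "-\<tau>"] Q1 oQ(2) by simp
    show ?thesis unfolding B1'_def unfolding Wt_def[symmetric] unfolding step1 unfolding W1_def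
      by (subst mult_four_block_mat[of _ "M - 1" M _ N _ "N - 1" _ _ "M - 1" _ "N - 1"]) (use P1 Q1 A PP1 QQ1 in auto)
  qed
  have PBP: "PP * B * PP = B1"
  proof -
    have Wtc: "Wt \<in> carrier_mat m (M + N)" using W1 unfolding Wt_def by auto
    have "B1 = W1 * (Wt * B * W1) * Wt" unfolding B1_def B1'_def Wt_def ..
    also have "W1 * ((Wt * B) * W1) = (W1 * (Wt * B)) * W1"
      by (rule assoc_mult_mat[symmetric, of _ "M + N" m _ "M + N" _ m]) (use W1 Wtc Bc in auto)
    also have "W1 * (Wt * B) = (W1 * Wt) * B"
      by (rule assoc_mult_mat[symmetric, of _ "M + N" m _ "M + N" _ "M + N"]) (use W1 Wtc Bc in auto)
    also have "((W1 * Wt) * B) * W1 * Wt = ((W1 * Wt) * B) * (W1 * Wt)"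
      by (rule assoc_mult_mat[of _ "M + N" "M + N" _ m _ "M + N"]) (use W1 Wtc Bc in auto)
    finally show ?thesis using WWt unfolding Wt_def by simp
  qed
  have claim2: "\<forall>s t. s \<in> carrier_vec M \<longrightarrow> t \<in> carrier_vec N \<longrightarrow> s \<bullet> u1 = 0 \<longrightarrow> t \<bullet> v1 = 0 \<longrightarrow>
          (PP * B * PP *\<^sub>v (s @\<^sub>v t) = - r \<longleftrightarrow> B1 *\<^sub>v (s @\<^sub>v t) = - r) \<and>
          (B1 *\<^sub>v (s @\<^sub>v t) = - r \<longleftrightarrow>
             (\<exists>z \<in> carrier_vec (M + N - 2). s @\<^sub>v t = W1 *\<^sub>v z \<and> B1' *\<^sub>v z = - r'))"
  proof (intro allI impI conjI)
    fix s t assume s: "s \<in> carrier_vec M" and t: "t \<in> carrier_vec N" and su: "s \<bullet> u1 = 0" and tv: "t \<bullet> v1 = 0"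
    have su': "u1 \<bullet> s = 0" using su comm_scalar_prod[OF s u1] by simp
    have tv': "v1 \<bullet> t = 0" using tv comm_scalar_prod[OF t v1] by simp
    show "(PP * B * PP *\<^sub>v (s @\<^sub>v t) = - r) = (B1 *\<^sub>v (s @\<^sub>v t) = - r)" unfolding PBP ..
    have st: "s @\<^sub>v t \<in> carrier_vec (M + N)" using s t by auto
    have fix': "W1 *\<^sub>v (transpose_mat W1 *\<^sub>v (s @\<^sub>v t)) = s @\<^sub>v t"
      unfolding WWtv[OF st] using PP_split[OF s t su' tv'] .
    show "(B1 *\<^sub>v (s @\<^sub>v t) = - r) = (\<exists>z\<in>carrier_vec (M + N - 2). s @\<^sub>v t = W1 *\<^sub>v z \<and> B1' *\<^sub>v z = - r')"
      using AP(1) st fix' unfolding m_def by blast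
  qed
  have claim3: "\<forall>z \<in> carrier_vec (M + N - 2). B1' *\<^sub>v z = - r' \<longrightarrow>
          (\<exists>s t. s \<in> carrier_vec M \<and> t \<in> carrier_vec N \<and> s \<bullet> u1 = 0 \<and> t \<bullet> v1 = 0 \<and>
                 W1 *\<^sub>v z = s @\<^sub>v t \<and> B1 *\<^sub>v (s @\<^sub>v t) = - r)"
  proof (intro ballI impI)
    fix z assume z: "z \<in> carrier_vec (M + N - 2)" and e: "B1' *\<^sub>v z = - r'"
    define a where "a = vec_first z (M - 1)"
    define d where "d = vec_last z (N - 1)"
    have za: "z = a @\<^sub>v d" unfolding a_def d_def using z mm m_def by simp
    have a: "a \<in> carrier_vec (M - 1)" and d: "d \<in> carrier_vec (N - 1)" unfolding a_def d_def by auto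
    have Wz: "W1 *\<^sub>v z = (P1 *\<^sub>v a) @\<^sub>v (Q1 *\<^sub>v d)"
      unfolding za W1_def
      by (subst four_block_mat_mult_vec[OF P1 _ _ Q1 a d]) (use P1 Q1 a d in auto)
    have sa: "(P1 *\<^sub>v a) \<bullet> u1 = 0"
    proof -
      have "(P1 *\<^sub>v a) \<bullet> u1 = u1 \<bullet> (P1 *\<^sub>v a)" using comm_scalar_prod[of "P1 *\<^sub>v a" M u1] P1 a u1 by auto
      also have "\<dots> = (transpose_mat P1 *\<^sub>v u1) \<bullet> a" using transpose_vec_mult_scalar[OF P1 a u1] by simp
      finally show ?thesis using oP(3) a by simp
    qed
    have tb: "(Q1 *\<^sub>v d) \<bullet> v1 = 0"
    proof -
      have "(Q1 *\<^sub>v d) \<bullet> v1 = v1 \<bullet> (Q1 *\<^sub>v d)" using comm_scalar_prod[of "Q1 *\<^sub>v d" N v1] Q1 d v1 by auto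
      also have "\<dots> = (transpose_mat Q1 *\<^sub>v v1) \<bullet> d" using transpose_vec_mult_scalar[OF Q1 d v1] by simp
      finally show ?thesis using oQ(3) d by simp
    qed
    have "B1 *\<^sub>v (W1 *\<^sub>v z) = - r" using AP(2) z e unfolding m_def by blast
    then show "\<exists>s t. s \<in> carrier_vec M \<and> t \<in> carrier_vec N \<and> s \<bullet> u1 = 0 \<and> t \<bullet> v1 = 0 \<and>
                 W1 *\<^sub>v z = s @\<^sub>v t \<and> B1 *\<^sub>v (s @\<^sub>v t) = - r"
      using Wz sa tb P1 Q1 a d by (intro exI[of _ "P1 *\<^sub>v a"] exI[of _ "Q1 *\<^sub>v d"]) auto
  qed
  show ?thesis using claim1 claim2 claim3 AP(3,4,5) by blast
qed

theorem theorem3p1: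
  fixes M N k :: nat and \<tau> \<theta>1 :: real
    and A U V P1 Q1 :: "real mat" and c1 d1 w0 z0 :: "real vec"
  assumes A: "A \<in> carrier_mat M N" and MN: "M \<ge> N" and tau: "\<tau> \<ge> 0"
    and U: "U \<in> carrier_mat M k" "transpose_mat U * U = 1\<^sub>m k"
    and V: "V \<in> carrier_mat N k" "transpose_mat V * V = 1\<^sub>m k"
    and trip: "singular_triplet (transpose_mat U * A * V) \<theta>1 c1 d1"
    and closest: "\<forall>\<sigma> \<in> singular_values (transpose_mat U * A * V). \<bar>\<theta>1 - \<tau>\<bar> \<le> \<bar>\<sigma> - \<tau>\<bar>"
    and P1: "P1 \<in> carrier_mat M (M - 1)"
    and Q1: "Q1 \<in> carrier_mat N (N - 1)"
    and orthP: "transpose_mat (mat_of_cols M (U *\<^sub>v c1 # cols P1)) * mat_of_cols M (U *\<^sub>v c1 # cols P1) = 1\<^sub>m M"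
    and orthQ: "transpose_mat (mat_of_cols N (V *\<^sub>v d1 # cols Q1)) * mat_of_cols N (V *\<^sub>v d1 # cols Q1) = 1\<^sub>m N"
    and w0: "w0 \<in> carrier_vec (M + N)" and z0: "z0 \<in> carrier_vec (M + N - 2)"
    and w0z0: "w0 = four_block_mat P1 (0\<^sub>m M (N - 1)) (0\<^sub>m N (M - 1)) Q1 *\<^sub>v z0"
  shows
   "let B = four_block_mat ((-\<tau>) \<cdot>\<^sub>m 1\<^sub>m M) A (transpose_mat A) ((-\<tau>) \<cdot>\<^sub>m 1\<^sub>m N);
        u1 = U *\<^sub>v c1; v1 = V *\<^sub>v d1;
        r = (A *\<^sub>v v1 - \<theta>1 \<cdot>\<^sub>v u1) @\<^sub>v (transpose_mat A *\<^sub>v u1 - \<theta>1 \<cdot>\<^sub>v v1);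
        W1 = four_block_mat P1 (0\<^sub>m M (N - 1)) (0\<^sub>m N (M - 1)) Q1;
        B1' = transpose_mat W1 * B * W1;
        B1 = W1 * B1' * transpose_mat W1;
        r' = transpose_mat W1 *\<^sub>v r;
        Pi = four_block_mat (1\<^sub>m M - outer u1 u1) (0\<^sub>m M N) (0\<^sub>m N M) (1\<^sub>m N - outer v1 v1)
    in B1' = four_block_mat ((-\<tau>) \<cdot>\<^sub>m 1\<^sub>m (M - 1)) (transpose_mat P1 * A * Q1)
                            (transpose_mat Q1 * transpose_mat A * P1) ((-\<tau>) \<cdot>\<^sub>m 1\<^sub>m (N - 1))
     \<and> (\<forall>s t. s \<in> carrier_vec M \<longrightarrow> t \<in> carrier_vec N \<longrightarrow> s \<bullet> u1 = 0 \<longrightarrow> t \<bullet> v1 = 0 \<longrightarrow>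
          (Pi * B * Pi *\<^sub>v (s @\<^sub>v t) = - r \<longleftrightarrow> B1 *\<^sub>v (s @\<^sub>v t) = - r) \<and>
          (B1 *\<^sub>v (s @\<^sub>v t) = - r \<longleftrightarrow>
             (\<exists>z \<in> carrier_vec (M + N - 2). s @\<^sub>v t = W1 *\<^sub>v z \<and> B1' *\<^sub>v z = - r')))
     \<and> (\<forall>z \<in> carrier_vec (M + N - 2). B1' *\<^sub>v z = - r' \<longrightarrow>
          (\<exists>s t. s \<in> carrier_vec M \<and> t \<in> carrier_vec N \<and> s \<bullet> u1 = 0 \<and> t \<bullet> v1 = 0 \<and>
                 W1 *\<^sub>v z = s @\<^sub>v t \<and> B1 *\<^sub>v (s @\<^sub>v t) = - r))
     \<and> (\<forall>j \<in> {1..M + N - 2}.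
          (\<forall>z. minres_iterate B1' r' z0 j z \<longrightarrow> minres_iterate B1 r w0 j (W1 *\<^sub>v z)) \<and>
          (\<forall>w. minres_iterate B1 r w0 j w \<longrightarrow> (\<exists>z. minres_iterate B1' r' z0 j z \<and> w = W1 *\<^sub>v z)))
     \<and> (\<forall>j \<in> {0..M + N - 2}. \<forall>w z. minres_iterate B1 r w0 j w \<longrightarrow> minres_iterate B1' r' z0 j z \<longrightarrow>
          vnorm (B1 *\<^sub>v w + r) = vnorm (B1' *\<^sub>v z + r'))"
    unfolding Let_def
  by (rule main_lemma[OF A U V trip P1 Q1 orthP orthQ z0 w0z0 refl refl refl refl refl refl refl refl refl])

end
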